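(* Let $d<l$ be positive integers. Let $Y=(\beta\mathbb{N})^l$ with the product topology and coordinatewise operation, and let $S_o=\{(P(1),\ldots,P(l)) : P(x)=\sum_{k=0}^d a_kx^k,\ a_0,\ldots,a_d\in\omega\}$ and $I_o=\{(P(1),\ldots,P(l)) : P(x)=\sum_{k=0}^d a_kx^k,\ a_0,\ldots,a_d\in\mathbb{N}\}$, viewed as subsets of $Y$. Then $S=\mathrm{cl}_Y(S_o)$ is a subsemigroup of $Y$, $I=\mathrm{cl}_Y(I_o)$ is an ideal of $S$, and for every $p\in K(\beta\mathbb{N})$ the constant tuple $(p,p,\ldots,p)$ belongs to $K(S)$ and hence to $I$.
   Context: $\omega=\{0,1,2,\ldots\}$, $\mathbb{N}=\{1,2,\ldots\}$. $\beta\mathbb{N}$ is the Stone–Čech compactification of the discrete space $\mathbb{N}$ (ultrafilters on $\mathbb{N}$), with the usual extension of addition making it a compact right topological semigroup; $\mathbb{N}$ is identified with the principal ultrafilters. $K(T)$ denotes the smallest two-sided ideal of a compact right topological semigroup $T$. *)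

theory Defs
  imports "HOL-Analysis.Analysis"
begin

text \<open>Ultrafilters on omega = {0,1,2,...} (the type nat), i.e. points of beta omega.\<close>
definition ultra :: "nat set set \<Rightarrow> bool" where
  "ultra U \<longleftrightarrow> UNIV \<in> U \<and> {} \<notin> U \<and>
     (\<forall>A B. A \<in> U \<longrightarrow> A \<subseteq> B \<longrightarrow> B \<in> U) \<and>
     (\<forall>A B. A \<in> U \<longrightarrow> B \<in> U \<longrightarrow> A \<inter> B \<in> U) \<and>
     (\<forall>A. A \<in> U \<or> - A \<in> U)"

definition betaW :: "nat set set set" where
  "betaW = {U. ultra U}"

definition betaN :: "nat set set set" where
  "betaN = {U. ultra U \<and> {0<..} \<in> U}"

definition pr :: "nat \<Rightarrow> nat set set" where
  "pr n = {A. n \<in> A}"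

definition uadd :: "nat set set \<Rightarrow> nat set set \<Rightarrow> nat set set" where
  "uadd p q = {A. {x. {y. x + y \<in> A} \<in> q} \<in> p}"

definition betaW_top :: "nat set set topology" where
  "betaW_top = topology_generated_by {{p \<in> betaW. A \<in> p} | A. True}"

definition Ytop :: "nat \<Rightarrow> (nat \<Rightarrow> nat set set) topology" where
  "Ytop l = product_topology (\<lambda>i. betaW_top) {1..l}"

definition Yadd :: "nat \<Rightarrow> (nat \<Rightarrow> nat set set) \<Rightarrow> (nat \<Rightarrow> nat set set) \<Rightarrow> (nat \<Rightarrow> nat set set)" where
  "Yadd l x y = (\<lambda>i\<in>{1..l}. uadd (x i) (y i))"

definition is_ideal :: "'a set \<Rightarrow> ('a \<Rightarrow> 'a \<Rightarrow> 'a) \<Rightarrow> 'a set \<Rightarrow> bool" where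
  "is_ideal T f J \<longleftrightarrow> J \<noteq> {} \<and> J \<subseteq> T \<and> (\<forall>x\<in>T. \<forall>y\<in>J. f x y \<in> J \<and> f y x \<in> J)"

definition Kmin :: "'a set \<Rightarrow> ('a \<Rightarrow> 'a \<Rightarrow> 'a) \<Rightarrow> 'a set" where
  "Kmin T f = (THE J. is_ideal T f J \<and> (\<forall>J'. is_ideal T f J' \<longrightarrow> J \<subseteq> J'))"

definition is_subsemigroup :: "'a set \<Rightarrow> 'a set \<Rightarrow> ('a \<Rightarrow> 'a \<Rightarrow> 'a) \<Rightarrow> bool" where
  "is_subsemigroup S T f \<longleftrightarrow> S \<subseteq> T \<and> (\<forall>x\<in>S. \<forall>y\<in>S. f x y \<in> S)"

definition poly_tuple :: "nat \<Rightarrow> nat \<Rightarrow> (nat \<Rightarrow> nat) \<Rightarrow> (nat \<Rightarrow> nat set set)" where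
  "poly_tuple l d a = (\<lambda>i\<in>{1..l}. pr (\<Sum>k\<le>d. a k * i ^ k))"

definition So :: "nat \<Rightarrow> nat \<Rightarrow> (nat \<Rightarrow> nat set set) set" where
  "So l d = {poly_tuple l d a | a. True}"

definition Io :: "nat \<Rightarrow> nat \<Rightarrow> (nat \<Rightarrow> nat set set) set" where
  "Io l d = {poly_tuple l d a | a. \<forall>k\<le>d. 1 \<le> a k}"

end

theory Submission
  imports Defs
begin

lemma ultra_compl: "ultra U \<Longrightarrow> (- A \<in> U) \<longleftrightarrow> (A \<notin> U)"
proof -
  assume u: "ultra U"
  have "\<not> (A \<in> U \<and> -A \<in> U)"
  proof
    assume "A \<in> U \<and> -A \<in> U"
    then have "A \<inter> -A \<in> U" using u unfolding ultra_def by blast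
    then show False using u unfolding ultra_def by simp
  qed
  then show ?thesis using u unfolding ultra_def by blast
qed

lemma ultra_int: "ultra U \<Longrightarrow> (A \<inter> B \<in> U) \<longleftrightarrow> (A \<in> U \<and> B \<in> U)"
  unfolding ultra_def by (meson Int_lower1 Int_lower2)

lemma ultra_mono: "ultra U \<Longrightarrow> A \<in> U \<Longrightarrow> A \<subseteq> B \<Longrightarrow> B \<in> U"
  unfolding ultra_def by blast

lemma ultra_UNIV: "ultra U \<Longrightarrow> UNIV \<in> U" unfolding ultra_def by blast
lemma ultra_empty: "ultra U \<Longrightarrow> {} \<notin> U" unfolding ultra_def by blast
lemma ultra_nonempty: "ultra U \<Longrightarrow> A \<in> U \<Longrightarrow> A \<noteq> {}" unfolding ultra_def by blast

lemma ultra_pr: "ultra (pr n)"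
  unfolding ultra_def pr_def by auto

lemma pr_betaW: "pr n \<in> betaW" by (simp add: ultra_pr betaW_def)

lemma mem_uadd: "A \<in> uadd p q \<longleftrightarrow> {x. {y. x + y \<in> A} \<in> q} \<in> p"
  unfolding uadd_def by simp

lemma uadd_assoc: "uadd (uadd p q) r = uadd p (uadd q r)"
  unfolding uadd_def by (simp add: add.assoc)

lemma uadd_pr: "uadd (pr m) (pr n) = pr (m + n)"
  unfolding uadd_def pr_def by simp

lemma mem_uadd_pr: "A \<in> uadd (pr n) q \<longleftrightarrow> {y. n + y \<in> A} \<in> q"
  unfolding uadd_def pr_def by simp

lemma ultra_uadd:
  assumes p: "ultra p" and q: "ultra q" shows "ultra (uadd p q)"
proof -
  have 1: "UNIV \<in> uadd p q" using p q by (simp add: mem_uadd ultra_UNIV)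
  have 2: "{} \<notin> uadd p q" using p q by (simp add: mem_uadd ultra_empty)
  have 3: "B \<in> uadd p q" if "A \<in> uadd p q" "A \<subseteq> B" for A B
  proof -
    have "{x. {y. x + y \<in> A} \<in> q} \<subseteq> {x. {y. x + y \<in> B} \<in> q}"
      using that(2) q ultra_mono[of q] by (smt (verit, best) mem_Collect_eq subset_iff)
    then show ?thesis using that(1) p ultra_mono[of p] by (auto simp: mem_uadd)
  qed
  have 4: "A \<inter> B \<in> uadd p q" if "A \<in> uadd p q" "B \<in> uadd p q" for A B
  proof -
    have "{x. {y. x + y \<in> A \<inter> B} \<in> q} = {x. {y. x + y \<in> A} \<in> q} \<inter> {x. {y. x + y \<in> B} \<in> q}"
      using ultra_int[OF q] by (auto simp: Collect_conj_eq)
    then show ?thesis using that p ultra_int[OF p] by (simp add: mem_uadd)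
  qed
  have 5: "A \<in> uadd p q \<or> - A \<in> uadd p q" for A
  proof -
    have e: "{y. x + y \<in> - A} = - {y. x + y \<in> A}" for x by auto
    have "{x. {y. x + y \<in> - A} \<in> q} = - {x. {y. x + y \<in> A} \<in> q}"
      unfolding e using ultra_compl[OF q] by blast
    then show ?thesis using ultra_compl[OF p] by (auto simp: mem_uadd)
  qed
  show ?thesis unfolding ultra_def using 1 2 3 4 5 by blast
qed

lemma uadd_betaW: "p \<in> betaW \<Longrightarrow> q \<in> betaW \<Longrightarrow> uadd p q \<in> betaW"
  by (simp add: betaW_def ultra_uadd)

lemma betaN_sub: "betaN \<subseteq> betaW" by (auto simp: betaN_def betaW_def)

lemma uadd_betaN_right: "p \<in> betaW \<Longrightarrow> q \<in> betaN \<Longrightarrow> uadd p q \<in> betaN"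
proof -
  assume p: "p \<in> betaW" and q: "q \<in> betaN"
  have "{x. {y. x + y \<in> {0<..}} \<in> q} = UNIV"
    using q by (auto simp: betaN_def elim!: ultra_mono)
  then show ?thesis using p q betaN_sub by (auto simp: betaN_def betaW_def mem_uadd ultra_uadd ultra_UNIV)
qed

lemma uadd_betaN_left: "p \<in> betaN \<Longrightarrow> q \<in> betaW \<Longrightarrow> uadd p q \<in> betaN"
proof -
  assume p: "p \<in> betaN" and q: "q \<in> betaW"
  have "{0<..} \<subseteq> {x. {y. x + y \<in> {(0::nat)<..}} \<in> q}"
    using q by (auto simp: betaW_def intro: ultra_mono[OF _ ultra_UNIV])
  then show ?thesis using p q betaN_sub by (auto simp: betaN_def betaW_def mem_uadd ultra_uadd elim: ultra_mono)
qed

definition bs :: "nat set \<Rightarrow> nat set set set" where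
  "bs A = {p \<in> betaW. A \<in> p}"

lemma betaW_top_eq: "betaW_top = topology_generated_by (range bs)"
proof -
  have "{{p \<in> betaW. A \<in> p} | A. True} = range bs" by (auto simp: bs_def)
  then show ?thesis by (simp add: betaW_top_def)
qed

lemma topspace_bW [simp]: "topspace betaW_top = betaW"
proof -
  have "\<Union>(range bs) = betaW"
    by (auto simp: bs_def betaW_def intro: ultra_UNIV)
  then show ?thesis by (simp add: betaW_top_eq)
qed

lemma open_bs: "openin betaW_top (bs A)"
  unfolding betaW_top_eq by (rule topology_generated_by_Basis) simp

lemma bs_Int: "bs A \<inter> bs B = bs (A \<inter> B)"
  by (auto simp: bs_def betaW_def ultra_int)

lemma bs_compl: "betaW - bs A = bs (- A)"
  by (auto simp: bs_def betaW_def ultra_compl)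

lemma open_basis:
  assumes "openin betaW_top U" "p \<in> U"
  shows "\<exists>A. p \<in> bs A \<and> bs A \<subseteq> U"
proof -
  have "generate_topology_on (range bs) U"
    using assms(1) unfolding betaW_top_eq by (rule openin_topology_generated_by)
  then show ?thesis using assms(2)
  proof (induction arbitrary: p)
    case Empty then show ?case by simp
  next
    case (Int a b)
    then obtain A B where "p \<in> bs A" "bs A \<subseteq> a" "p \<in> bs B" "bs B \<subseteq> b" by blast
    then show ?case by (intro exI[of _ "A \<inter> B"]) (auto simp flip: bs_Int)
  next
    case (UN K)
    then obtain k where "k \<in> K" "p \<in> k" by blast
    with UN.IH[of k p] show ?case by blast
  next
    case (Basis s)
    then show ?case by auto
  qed
qed

lemma closed_bs: "closedin betaW_top (bs A)"
  unfolding closedin_def using bs_compl[of A] open_bs[of "-A"]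
  by (auto simp: bs_def)

lemma Hausdorff_bW: "Hausdorff_space betaW_top"
  unfolding Hausdorff_space_def
proof (intro allI impI, elim conjE)
  fix p q assume p: "p \<in> topspace betaW_top" and q: "q \<in> topspace betaW_top" and ne: "p \<noteq> q"
  then have up: "ultra p" and uq: "ultra q" by (auto simp: betaW_def)
  obtain A where "A \<in> p" "A \<notin> q"
  proof (cases "\<exists>A. A \<in> p \<and> A \<notin> q")
    case True then show ?thesis using that by blast
  next
    case False
    then have "p \<subseteq> q" by blast
    moreover obtain B where "B \<in> q" "B \<notin> p" using False ne \<open>p \<subseteq> q\<close> by blast
    then have "-B \<in> p" using ultra_compl[OF up] by blast
    then show ?thesis using that[of "-B"] \<open>B \<in> q\<close> ultra_compl[OF uq] by blast
  qed
  then have "-A \<in> q" using ultra_compl[OF uq] by blast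
  show "\<exists>U V. openin betaW_top U \<and> openin betaW_top V \<and> p \<in> U \<and> q \<in> V \<and> disjnt U V"
    apply (rule exI[of _ "bs A"], rule exI[of _ "bs (-A)"])
    using open_bs \<open>A \<in> p\<close> \<open>-A \<in> q\<close> p q by (auto simp: bs_def disjnt_def betaW_def ultra_compl)
qed

lemma continuous_bW:
  assumes maps: "\<And>p. p \<in> betaW \<Longrightarrow> h p \<in> betaW"
    and pre: "\<And>A. \<exists>B. \<forall>p\<in>betaW. A \<in> h p \<longleftrightarrow> B \<in> p"
  shows "continuous_map betaW_top betaW_top h"
  unfolding continuous_map_def
proof (intro conjI allI impI)
  show "h \<in> topspace betaW_top \<rightarrow> topspace betaW_top" using maps by (simp add: Pi_iff)
  fix U assume U: "openin betaW_top U"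
  show "openin betaW_top {x \<in> topspace betaW_top. h x \<in> U}"
  proof (rule openin_subopen[THEN iffD2], rule ballI)
    fix p assume "p \<in> {x \<in> topspace betaW_top. h x \<in> U}"
    then have p: "p \<in> betaW" "h p \<in> U" by auto
    obtain A where A: "h p \<in> bs A" "bs A \<subseteq> U" using open_basis[OF U p(2)] by blast
    obtain B where B: "\<forall>p\<in>betaW. A \<in> h p \<longleftrightarrow> B \<in> p" using pre[of A] by (elim exE) (rule that)
    have "bs B \<subseteq> {x \<in> topspace betaW_top. h x \<in> U}"
    proof
      fix x assume "x \<in> bs B"
      then have x: "x \<in> betaW" "B \<in> x" by (auto simp: bs_def)
      then have "A \<in> h x" using B by blast
      then have "h x \<in> bs A" using maps[OF x(1)] by (simp add: bs_def)
      then show "x \<in> {x \<in> topspace betaW_top. h x \<in> U}" using A(2) x by auto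
    qed
    moreover have "p \<in> bs B" using A(1) B p(1) by (simp add: bs_def)
    ultimately show "\<exists>T. openin betaW_top T \<and> p \<in> T \<and> T \<subseteq> {x \<in> topspace betaW_top. h x \<in> U}"
      using open_bs by blast
  qed
qed

lemma cont_right: "q \<in> betaW \<Longrightarrow> continuous_map betaW_top betaW_top (\<lambda>p. uadd p q)"
  by (rule continuous_bW) (auto simp: uadd_betaW mem_uadd)

lemma cont_left_pr: "continuous_map betaW_top betaW_top (\<lambda>q. uadd (pr n) q)"
  by (rule continuous_bW) (auto simp: uadd_betaW mem_uadd_pr pr_betaW)

lemma closure_pr: "betaW_top closure_of (range pr) = betaW"
proof -
  have "p \<in> betaW_top closure_of (range pr)" if p: "p \<in> betaW" for p
    unfolding in_closure_of
  proof (intro conjI allI impI)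
    show "p \<in> topspace betaW_top" using p by simp
    fix T assume "p \<in> T \<and> openin betaW_top T"
    then obtain A where A: "p \<in> bs A" "bs A \<subseteq> T" using open_basis by blast
    then have "A \<noteq> {}" by (auto simp: bs_def betaW_def ultra_empty)
    then obtain a where "a \<in> A" by blast
    then have "pr a \<in> bs A" by (simp add: bs_def pr_betaW) (simp add: pr_def)
    then show "\<exists>y. y \<in> range pr \<and> y \<in> T" using A by blast
  qed
  then show ?thesis using closure_of_subset_topspace[of betaW_top "range pr"] by auto
qed

lemma finite_chain_max:
  assumes "finite F" "F \<noteq> {}" "\<forall>A\<in>F. \<forall>B\<in>F. A \<subseteq> B \<or> B \<subseteq> A"
  shows "\<exists>X\<in>F. \<forall>Y\<in>F. Y \<subseteq> X"
  using assms
proof (induction F rule: finite_ne_induct)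
  case (singleton x) then show ?case by auto
next
  case (insert x F)
  then obtain X where X: "X \<in> F" "\<forall>Y\<in>F. Y \<subseteq> X" by auto
  have "x \<subseteq> X \<or> X \<subseteq> x" using insert.prems X(1) by auto
  then show ?case
  proof
    assume "x \<subseteq> X" then show ?thesis using X by (intro bexI[of _ X]) auto
  next
    assume "X \<subseteq> x" then show ?thesis using X by (intro bexI[of _ x]) auto
  qed
qed

lemma finite_chain_min:
  assumes "finite F" "F \<noteq> {}" "\<forall>A\<in>F. \<forall>B\<in>F. A \<subseteq> B \<or> B \<subseteq> A"
  shows "\<exists>X\<in>F. \<forall>Y\<in>F. X \<subseteq> Y"
  using assms
proof (induction F rule: finite_ne_induct)
  case (singleton x) then show ?case by auto
next
  case (insert x F)
  then obtain X where X: "X \<in> F" "\<forall>Y\<in>F. X \<subseteq> Y" by auto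
  have "x \<subseteq> X \<or> X \<subseteq> x" using insert.prems X(1) by auto
  then show ?case
  proof
    assume "x \<subseteq> X" then show ?thesis using X by (intro bexI[of _ x]) auto
  next
    assume "X \<subseteq> x" then show ?thesis using X by (intro bexI[of _ X]) auto
  qed
qed

definition fip :: "'a set set \<Rightarrow> bool" where
  "fip G \<longleftrightarrow> (\<forall>F. finite F \<and> F \<subseteq> G \<longrightarrow> \<Inter>F \<noteq> {})"

lemma fip_insert:
  assumes "fip M" "\<And>F. finite F \<Longrightarrow> F \<subseteq> M \<Longrightarrow> \<Inter>F \<inter> A \<noteq> {}"
  shows "fip (insert A M)"
  unfolding fip_def
proof (intro allI impI, elim conjE)
  fix F assume F: "finite F" "F \<subseteq> insert A M"
  show "\<Inter>F \<noteq> {}"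
  proof (cases "A \<in> F")
    case True
    have "\<Inter>F = \<Inter>(F - {A}) \<inter> A" using True by blast
    then show ?thesis using assms(2)[of "F - {A}"] F by auto
  next
    case False
    then show ?thesis using assms(1) F unfolding fip_def by blast
  qed
qed

lemma ultra_Inter: "finite F \<Longrightarrow> ultra p \<Longrightarrow> F \<subseteq> p \<Longrightarrow> \<Inter>F \<in> p"
proof (induction F rule: finite_induct)
  case empty then show ?case by (simp add: ultra_UNIV)
next
  case (insert x F) then show ?case by (simp add: ultra_int)
qed

lemma ultra_extend:
  assumes G: "fip (G :: nat set set)"
  shows "\<exists>U. ultra U \<and> G \<subseteq> U"
proof -
  define \<C> where "\<C> = {F. G \<subseteq> F \<and> fip F}"
  have "\<exists>M\<in>\<C>. \<forall>X\<in>\<C>. M \<subseteq> X \<longrightarrow> X = M"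
  proof (rule Zorn_Lemma2, rule ballI)
    fix C assume C: "C \<in> chains \<C>"
    then have Csub: "C \<subseteq> \<C>" and Cch: "\<forall>A\<in>C. \<forall>B\<in>C. A \<subseteq> B \<or> B \<subseteq> A"
      by (auto simp: chains_def chain_subset_def)
    show "\<exists>U\<in>\<C>. \<forall>X\<in>C. X \<subseteq> U"
    proof (cases "C = {}")
      case True then show ?thesis using G by (auto simp: \<C>_def)
    next
      case False
      have "fip (\<Union>C)"
        unfolding fip_def
      proof (intro allI impI, elim conjE)
        fix F assume F: "finite F" "F \<subseteq> \<Union>C"
        show "\<Inter>F \<noteq> {}"
        proof (cases "F = {}")
          case True then show ?thesis by simp
        next
          case Fne: False
          have "\<forall>f\<in>F. \<exists>X. X \<in> C \<and> f \<in> X" using F by blast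
          from bchoice[OF this] obtain g where g: "\<forall>f\<in>F. g f \<in> C \<and> f \<in> g f" by blast
          have "finite (g ` F)" "g ` F \<noteq> {}" "\<forall>A\<in>g ` F. \<forall>B\<in>g ` F. A \<subseteq> B \<or> B \<subseteq> A"
            using F Fne g Cch by auto
          from finite_chain_max[OF this] obtain X where X: "X \<in> g ` F" "\<forall>Y\<in>g ` F. Y \<subseteq> X" by blast
          have "F \<subseteq> X" using X g by blast
          moreover have "fip X" using X(1) g Csub by (auto simp: \<C>_def)
          ultimately show ?thesis using F(1) unfolding fip_def by blast
        qed
      qed
      moreover have "G \<subseteq> \<Union>C" using False Csub by (auto simp: \<C>_def)
      ultimately show ?thesis by (intro bexI[of _ "\<Union>C"]) (auto simp: \<C>_def)
    qed
  qed
  then obtain M where M: "M \<in> \<C>" "\<forall>X\<in>\<C>. M \<subseteq> X \<longrightarrow> X = M" by blast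
  have fM: "fip M" and GM: "G \<subseteq> M" using M(1) by (auto simp: \<C>_def)
  have key: "A \<in> M" if "\<And>F. finite F \<Longrightarrow> F \<subseteq> M \<Longrightarrow> \<Inter>F \<inter> A \<noteq> {}" for A
  proof -
    have "insert A M \<in> \<C>" using fip_insert[OF fM that] GM by (auto simp: \<C>_def)
    then have "insert A M = M" using M(2) by blast
    then show ?thesis by blast
  qed
  have "ultra M"
    unfolding ultra_def
  proof (intro conjI allI impI)
    show "UNIV \<in> M" by (rule key) (use fM in \<open>auto simp: fip_def\<close>)
    show "{} \<notin> M" using fM[unfolded fip_def, rule_format, of "{{}}"] by auto
  next
    fix A B assume "A \<in> M" "A \<subseteq> B"
    show "B \<in> M"
    proof (rule key)
      fix F assume "finite F" "F \<subseteq> M"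
      then have "\<Inter>(insert A F) \<noteq> {}" using fM[unfolded fip_def, rule_format, of "insert A F"] \<open>A \<in> M\<close> by auto
      then show "\<Inter>F \<inter> B \<noteq> {}" using \<open>A \<subseteq> B\<close> by blast
    qed
  next
    fix A B assume "A \<in> M" "B \<in> M"
    show "A \<inter> B \<in> M"
    proof (rule key)
      fix F assume "finite F" "F \<subseteq> M"
      then have "\<Inter>(insert A (insert B F)) \<noteq> {}" using fM[unfolded fip_def, rule_format, of "insert A (insert B F)"] \<open>A \<in> M\<close> \<open>B \<in> M\<close> by auto
      then show "\<Inter>F \<inter> (A \<inter> B) \<noteq> {}" by auto
    qed
  next
    fix A
    show "A \<in> M \<or> - A \<in> M"
    proof (rule ccontr)
      assume "\<not> (A \<in> M \<or> - A \<in> M)"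
      then obtain F1 F2 where F1: "finite F1" "F1 \<subseteq> M" "\<Inter>F1 \<inter> A = {}"
        and F2: "finite F2" "F2 \<subseteq> M" "\<Inter>F2 \<inter> - A = {}"
        using key[of A] key[of "-A"] by blast
      have "\<Inter>(F1 \<union> F2) = {}" using F1(3) F2(3) by auto
      then show False using fM[unfolded fip_def, rule_format, of "F1 \<union> F2"] F1 F2 by auto
    qed
  qed
  then show ?thesis using GM by blast
qed

lemma compact_bW: "compact_space betaW_top"
  unfolding compact_space_def compactin_def
proof (intro conjI allI impI subset_refl, elim conjE, rule ccontr)
  fix \<U> assume opU: "\<forall>U\<in>\<U>. openin betaW_top U" and cov: "topspace betaW_top \<subseteq> \<Union>\<U>"
    and nofin: "\<nexists>\<F>. finite \<F> \<and> \<F> \<subseteq> \<U> \<and> topspace betaW_top \<subseteq> \<Union>\<F>"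
  define G where "G = {C. \<exists>U\<in>\<U>. bs (- C) \<subseteq> U}"
  have "fip G"
    unfolding fip_def
  proof (intro allI impI, elim conjE)
    fix F assume F: "finite F" "F \<subseteq> G"
    then have "\<forall>C\<in>F. \<exists>U. U \<in> \<U> \<and> bs (- C) \<subseteq> U" by (auto simp: G_def)
    from bchoice[OF this] obtain u where u: "\<forall>C\<in>F. u C \<in> \<U> \<and> bs (- C) \<subseteq> u C" by blast
    have "\<not> (topspace betaW_top \<subseteq> \<Union>(u ` F))" using nofin F(1) u by blast
    then obtain p where p: "p \<in> betaW" "p \<notin> \<Union>(u ` F)" by auto
    have "F \<subseteq> p"
    proof
      fix C assume "C \<in> F"
      then have "p \<notin> bs (- C)" using u p by blast
      then have "- C \<notin> p" using p(1) by (simp add: bs_def)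
      then show "C \<in> p" using p(1) ultra_compl[of p C] by (auto simp: betaW_def)
    qed
    then have "\<Inter>F \<in> p" using ultra_Inter[of F p] p(1) F(1) by (simp add: betaW_def)
    then show "\<Inter>F \<noteq> {}" using p(1) by (auto simp: betaW_def ultra_empty)
  qed
  then obtain U where U: "ultra U" "G \<subseteq> U" using ultra_extend by blast
  then have "U \<in> topspace betaW_top" by (simp add: betaW_def)
  then obtain V where V: "V \<in> \<U>" "U \<in> V" using cov by blast
  then obtain A where A: "U \<in> bs A" "bs A \<subseteq> V" using open_basis opU by blast
  then have "- A \<in> G" using V(1) by (auto simp: G_def)
  then have "- A \<in> U" using U by blast
  moreover have "A \<in> U" using A(1) by (simp add: bs_def)
  ultimately show False using ultra_compl[OF U(1)] by blast
qed

lemma zorn_closed_min: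
  assumes K: "compactin X K" and ne: "\<F> \<noteq> {}"
    and F: "\<And>A. A \<in> \<F> \<Longrightarrow> closedin X A \<and> A \<noteq> {} \<and> A \<subseteq> K"
    and ch: "\<And>C. C \<noteq> {} \<Longrightarrow> C \<subseteq> \<F> \<Longrightarrow> (\<forall>A\<in>C. \<forall>B\<in>C. A \<subseteq> B \<or> B \<subseteq> A) \<Longrightarrow> \<Inter>C \<noteq> {} \<Longrightarrow> \<Inter>C \<in> \<F>"
  shows "\<exists>M\<in>\<F>. \<forall>A\<in>\<F>. A \<subseteq> M \<longrightarrow> A = M"
proof -
  have cs: "compact_space (subtopology X K)" using K by (rule compact_space_subtopology)
  have nonempty: "\<Inter>C \<noteq> {}" if C: "C \<noteq> {}" "C \<subseteq> \<F>" "\<forall>A\<in>C. \<forall>B\<in>C. A \<subseteq> B \<or> B \<subseteq> A" for C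
  proof -
    have cl: "\<forall>A\<in>C. closedin (subtopology X K) A"
      using C F by (meson closedin_subset_topspace subsetD)
    have "\<Inter>Fs \<noteq> {}" if "finite Fs" "Fs \<subseteq> C" for Fs
    proof (cases "Fs = {}")
      case True then show ?thesis by simp
    next
      case False
      have "\<forall>A\<in>Fs. \<forall>B\<in>Fs. A \<subseteq> B \<or> B \<subseteq> A" using C(3) that(2) by blast
      from finite_chain_min[OF that(1) False this] obtain m where m: "m \<in> Fs" "\<forall>Y\<in>Fs. m \<subseteq> Y" by blast
      then have "\<Inter>Fs = m" by blast
      moreover have "m \<noteq> {}" using F m(1) that(2) C(2) by blast
      ultimately show ?thesis by simp
    qed
    then show ?thesis using cs[unfolded compact_space_fip, rule_format, of C] cl by blast
  qed
  define \<A> where "\<A> = uminus ` \<F>"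
  have "\<exists>M\<in>\<A>. \<forall>X\<in>\<A>. M \<subseteq> X \<longrightarrow> X = M"
  proof (rule Zorn_Lemma2, rule ballI)
    fix C assume C: "C \<in> chains \<A>"
    then have Csub: "C \<subseteq> \<A>" and Cch: "\<forall>A\<in>C. \<forall>B\<in>C. A \<subseteq> B \<or> B \<subseteq> A"
      by (auto simp: chains_def chain_subset_def)
    show "\<exists>U\<in>\<A>. \<forall>X\<in>C. X \<subseteq> U"
    proof (cases "C = {}")
      case True then show ?thesis using ne by (auto simp: \<A>_def)
    next
      case False
      define C' where "C' = uminus ` C"
      have C'sub: "C' \<subseteq> \<F>" using Csub by (auto simp: C'_def \<A>_def)
      have C'ch: "\<forall>A\<in>C'. \<forall>B\<in>C'. A \<subseteq> B \<or> B \<subseteq> A" using Cch by (auto simp: C'_def)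
      have C'ne: "C' \<noteq> {}" using False by (simp add: C'_def)
      have "\<Inter>C' \<in> \<F>" using ch[OF C'ne C'sub C'ch nonempty[OF C'ne C'sub C'ch]] .
      then have "- \<Inter>C' \<in> \<A>" by (simp add: \<A>_def)
      moreover have "\<forall>X\<in>C. X \<subseteq> - \<Inter>C'" by (auto simp: C'_def)
      ultimately show ?thesis by blast
    qed
  qed
  then obtain M' where M': "M' \<in> \<A>" "\<forall>X\<in>\<A>. M' \<subseteq> X \<longrightarrow> X = M'" by blast
  then obtain M where M: "M \<in> \<F>" "M' = - M" by (auto simp: \<A>_def)
  have "\<forall>A\<in>\<F>. A \<subseteq> M \<longrightarrow> A = M"
  proof (intro ballI impI)
    fix A assume "A \<in> \<F>" "A \<subseteq> M"
    then have "- A \<in> \<A>" "M' \<subseteq> - A" using M(2) by (auto simp: \<A>_def)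
    then have "- A = - M" using M' M(2) by blast
    then show "A = M" by simp
  qed
  then show ?thesis using M(1) by blast
qed

lemma ellis:
  assumes H: "Hausdorff_space X" and A: "compactin X A" "A \<noteq> {}"
    and cl: "\<And>x y. x \<in> A \<Longrightarrow> y \<in> A \<Longrightarrow> f x y \<in> A"
    and assoc: "\<And>x y z. x \<in> A \<Longrightarrow> y \<in> A \<Longrightarrow> z \<in> A \<Longrightarrow> f (f x y) z = f x (f y z)"
    and cont: "\<And>y. y \<in> A \<Longrightarrow> continuous_map (subtopology X A) X (\<lambda>x. f x y)"
  shows "\<exists>e\<in>A. f e e = e"
proof -
  define \<F> where "\<F> = {B. B \<subseteq> A \<and> B \<noteq> {} \<and> closedin X B \<and> (\<forall>x\<in>B. \<forall>y\<in>B. f x y \<in> B)}"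
  have "A \<in> \<F>" using A cl compactin_imp_closedin[OF H] by (auto simp: \<F>_def)
  have "\<exists>M\<in>\<F>. \<forall>B\<in>\<F>. B \<subseteq> M \<longrightarrow> B = M"
  proof (rule zorn_closed_min[OF A(1)])
    show "\<F> \<noteq> {}" using \<open>A \<in> \<F>\<close> by blast
    show "\<And>B. B \<in> \<F> \<Longrightarrow> closedin X B \<and> B \<noteq> {} \<and> B \<subseteq> A" by (auto simp: \<F>_def)
    fix C assume C: "C \<noteq> {}" "C \<subseteq> \<F>" "\<Inter>C \<noteq> {}"
    have "closedin X (\<Inter>C)" using C by (intro closedin_Inter) (auto simp: \<F>_def)
    moreover have "\<Inter>C \<subseteq> A"
    proof -
      obtain c where "c \<in> C" using C(1) by blast
      then have "\<Inter>C \<subseteq> c" "c \<subseteq> A" using C(2) by (auto simp: \<F>_def)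
      then show ?thesis by blast
    qed
    moreover have "\<forall>x\<in>\<Inter>C. \<forall>y\<in>\<Inter>C. f x y \<in> \<Inter>C" using C(2) by (auto simp: \<F>_def)
    ultimately show "\<Inter>C \<in> \<F>" using C(3) by (simp add: \<F>_def)
  qed
  then obtain M where M: "M \<in> \<F>" "\<forall>B\<in>\<F>. B \<subseteq> M \<longrightarrow> B = M" by blast
  have MA: "M \<subseteq> A" and Mne: "M \<noteq> {}" and Mcl: "closedin X M" and Mop: "\<forall>x\<in>M. \<forall>y\<in>M. f x y \<in> M"
    using M(1) by (auto simp: \<F>_def)
  obtain a where a: "a \<in> M" using Mne by blast
  have contM: "continuous_map (subtopology X M) X (\<lambda>x. f x a)"
    using cont[of a] a MA continuous_map_from_subtopology_mono by blast
  have Mcpt: "compactin X M" using closed_compactin[OF A(1) MA Mcl] .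
  have "compactin X ((\<lambda>x. f x a) ` M)"
  proof -
    have "compactin (subtopology X M) M" using Mcpt by (simp add: compactin_subtopology)
    from image_compactin[OF this contM] show ?thesis .
  qed
  then have "closedin X ((\<lambda>x. f x a) ` M)" using compactin_imp_closedin[OF H] by blast
  moreover have "(\<lambda>x. f x a) ` M \<subseteq> M" using Mop a by blast
  moreover have "\<forall>x\<in>(\<lambda>x. f x a) ` M. \<forall>y\<in>(\<lambda>x. f x a) ` M. f x y \<in> (\<lambda>x. f x a) ` M"
  proof (intro ballI)
    fix x y assume "x \<in> (\<lambda>x. f x a) ` M" "y \<in> (\<lambda>x. f x a) ` M"
    then obtain u v where uv: "u \<in> M" "v \<in> M" "x = f u a" "y = f v a" by blast
    have uvA: "u \<in> A" "v \<in> A" "a \<in> A" using uv MA a by auto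
    have "f x y = f (f (f u a) v) a" using uvA uv(3,4) assoc cl by simp
    moreover have "f (f u a) v \<in> M" using uv Mop a by blast
    ultimately show "f x y \<in> (\<lambda>x. f x a) ` M" by blast
  qed
  ultimately have "(\<lambda>x. f x a) ` M \<in> \<F>" using MA a by (auto simp: \<F>_def)
  then have img: "(\<lambda>x. f x a) ` M = M" using M(2) \<open>(\<lambda>x. f x a) ` M \<subseteq> M\<close> by blast
  define B where "B = {b \<in> M. f b a = a}"
  have "a \<in> (\<lambda>x. f x a) ` M" using img a by simp
  then obtain b where "b \<in> M" "f b a = a" by (metis imageE)
  then have "b \<in> B" unfolding B_def by simp
  then have "B \<noteq> {}" by (rule ex_in_conv[THEN iffD1, OF exI])
  have "a \<in> topspace X" using a closedin_subset[OF Mcl] by (rule subsetD[rotated])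
  then have "closedin X {a}" using closedin_t1_singleton[OF Hausdorff_imp_t1_space[OF H]] by blast
  then have "closedin (subtopology X M) {x \<in> topspace (subtopology X M). f x a \<in> {a}}"
    using closedin_continuous_map_preimage[OF contM] by blast
  moreover have "{x \<in> topspace (subtopology X M). f x a \<in> {a}} = B"
    using Mcl closedin_subset unfolding B_def by (auto simp: topspace_subtopology)
  ultimately have "closedin X B" using closedin_trans_full Mcl by metis
  moreover have "\<forall>x\<in>B. \<forall>y\<in>B. f x y \<in> B"
  proof (intro ballI)
    fix x y assume "x \<in> B" "y \<in> B"
    then have "x \<in> M" "y \<in> M" "f x a = a" "f y a = a" by (auto simp: B_def)
    then have "f (f x y) a = a" using assoc MA a by (simp add: subset_iff)
    then show "f x y \<in> B" using \<open>x \<in> M\<close> \<open>y \<in> M\<close> Mop by (simp add: B_def)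
  qed
  ultimately have "B \<in> \<F>" using \<open>B \<noteq> {}\<close> MA by (auto simp: \<F>_def B_def)
  then have "B = M" using M(2) by (auto simp: B_def)
  then have "f a a = a" using a by (auto simp: B_def)
  then show ?thesis using a MA by blast
qed

lemma min_idem_in_ideal:
  assumes H: "Hausdorff_space X" and T: "compactin X T"
    and cl: "\<And>x y. x \<in> T \<Longrightarrow> y \<in> T \<Longrightarrow> f x y \<in> T"
    and assoc: "\<And>x y z. x \<in> T \<Longrightarrow> y \<in> T \<Longrightarrow> z \<in> T \<Longrightarrow> f (f x y) z = f x (f y z)"
    and cont: "\<And>y. y \<in> T \<Longrightarrow> continuous_map (subtopology X T) X (\<lambda>x. f x y)"
    and e: "e \<in> T" "f e e = e"
    and emin: "\<And>g. g \<in> T \<Longrightarrow> f g g = g \<Longrightarrow> f g e = g \<Longrightarrow> f e g = g \<Longrightarrow> g = e"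
    and J: "is_ideal T f J"
  shows "e \<in> J"
proof -
  obtain j where j: "j \<in> J" using J by (auto simp: is_ideal_def)
  have jT: "j \<in> T" using j J by (auto simp: is_ideal_def)
  define c where "c = f j e"
  have cT: "c \<in> T" using cl jT e by (simp add: c_def)
  define A where "A = (\<lambda>x. f x c) ` T"
  have AT: "A \<subseteq> T" using cl cT by (auto simp: A_def)
  have "compactin X A"
  proof -
    have "compactin (subtopology X T) T" using T by (simp add: compactin_subtopology)
    from image_compactin[OF this cont[OF cT]] show ?thesis by (simp add: A_def)
  qed
  moreover have "A \<noteq> {}" using e(1) by (auto simp: A_def)
  moreover have "\<And>x y. x \<in> A \<Longrightarrow> y \<in> A \<Longrightarrow> f x y \<in> A"
  proof -
    fix x y assume "x \<in> A" "y \<in> A"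
    then obtain u v where uv: "u \<in> T" "v \<in> T" "x = f u c" "y = f v c" by (auto simp: A_def)
    have "f x y = f (f (f u c) v) c" using uv assoc cl cT by simp
    moreover have "f (f u c) v \<in> T" using uv cl cT by simp
    ultimately show "f x y \<in> A" by (auto simp: A_def)
  qed
  moreover have "\<And>x y z. x \<in> A \<Longrightarrow> y \<in> A \<Longrightarrow> z \<in> A \<Longrightarrow> f (f x y) z = f x (f y z)"
    using assoc AT by blast
  moreover have "\<And>y. y \<in> A \<Longrightarrow> continuous_map (subtopology X A) X (\<lambda>x. f x y)"
    using cont AT continuous_map_from_subtopology_mono by blast
  ultimately obtain g where g: "g \<in> A" "f g g = g" using ellis[OF H] by metis
  then obtain u where u: "u \<in> T" "g = f u c" by (auto simp: A_def)
  have gT: "g \<in> T" using g AT by blast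
  have ge: "f g e = g" using u assoc cl jT e by (simp add: c_def)
  define h where "h = f e g"
  have hT: "h \<in> T" using cl e gT by (simp add: h_def)
  have "f h h = f e (f (f g e) g)" using assoc cl e(1) gT by (simp add: h_def)
  then have hh: "f h h = h" using ge g(2) by (simp add: h_def)
  have he: "f h e = h" using assoc cl e(1) gT ge by (simp add: h_def)
  have "f e h = f (f e e) g" using assoc cl e(1) gT by (simp add: h_def)
  then have eh: "f e h = h" using e(2) by (simp add: h_def)
  have "h = e" using emin[OF hT hh he eh] .
  moreover have "g \<in> J"
  proof -
    have "f u j \<in> J" using J u(1) j by (auto simp: is_ideal_def)
    then have "f (f u j) e \<in> J" using J e(1) by (auto simp: is_ideal_def)
    then show ?thesis using u assoc jT e by (simp add: c_def)
  qed
  then have "h \<in> J" using J e(1) by (auto simp: is_ideal_def h_def)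
  ultimately show ?thesis by simp
qed

lemma Kmin_char:
  assumes cl: "\<And>x y. x \<in> T \<Longrightarrow> y \<in> T \<Longrightarrow> f x y \<in> T"
    and e: "e \<in> T" and eJ: "\<And>J. is_ideal T f J \<Longrightarrow> e \<in> J"
  shows "x \<in> Kmin T f \<longleftrightarrow> (\<forall>J. is_ideal T f J \<longrightarrow> x \<in> J)"
proof -
  define K0 where "K0 = \<Inter>{J. is_ideal T f J}"
  have TI: "is_ideal T f T" using cl e by (auto simp: is_ideal_def)
  have K0T: "K0 \<subseteq> T" using TI by (auto simp: K0_def)
  have "is_ideal T f K0"
    unfolding is_ideal_def
  proof (intro conjI ballI)
    show "K0 \<noteq> {}" using eJ by (auto simp: K0_def)
    show "K0 \<subseteq> T" by (rule K0T)
    fix a b assume "a \<in> T" "b \<in> K0"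
    then show "f a b \<in> K0" "f b a \<in> K0" by (auto simp: K0_def is_ideal_def)
  qed
  have P: "is_ideal T f K0 \<and> (\<forall>J'. is_ideal T f J' \<longrightarrow> K0 \<subseteq> J')"
    using \<open>is_ideal T f K0\<close> by (auto simp: K0_def)
  have U: "J = K0" if "is_ideal T f J \<and> (\<forall>J'. is_ideal T f J' \<longrightarrow> J \<subseteq> J')" for J
    using that P by blast
  have "Kmin T f = K0"
    unfolding Kmin_def using P U by (rule the_equality)
  then show ?thesis by (auto simp: K0_def)
qed

lemma betaN_bs: "betaN = bs {0<..}"
  by (auto simp: betaN_def bs_def betaW_def)

lemma compact_betaN: "compactin betaW_top betaN"
  unfolding betaN_bs by (rule closedin_compact_space[OF compact_bW closed_bs])

lemma pr1_betaN: "pr 1 \<in> betaN"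
  unfolding betaN_def using ultra_pr[of 1] by (simp add: pr_def)

lemma image_closed_bW:
  assumes "compactin betaW_top A" "continuous_map betaW_top betaW_top g"
  shows "closedin betaW_top (g ` A)"
  using compactin_imp_closedin[OF Hausdorff_bW image_compactin[OF assms]] .

lemma exists_minq:
  "\<exists>q\<in>betaN. uadd q q = q \<and> (\<forall>e\<in>betaW. uadd e e = e \<longrightarrow> uadd e q = e \<longrightarrow> uadd q e = e \<longrightarrow> e = q)"
proof -
  define \<F> where "\<F> = {M. M \<subseteq> betaN \<and> M \<noteq> {} \<and> closedin betaW_top M \<and> (\<forall>x\<in>betaN. \<forall>m\<in>M. uadd x m \<in> M)}"
  have "betaN \<in> \<F>"
    using compact_betaN compactin_imp_closedin[OF Hausdorff_bW] pr1_betaN betaN_sub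
    by (auto simp: \<F>_def intro: uadd_betaN_right)
  have "\<exists>M\<in>\<F>. \<forall>B\<in>\<F>. B \<subseteq> M \<longrightarrow> B = M"
  proof (rule zorn_closed_min[OF compact_betaN])
    show "\<F> \<noteq> {}" using \<open>betaN \<in> \<F>\<close> by blast
    show "\<And>B. B \<in> \<F> \<Longrightarrow> closedin betaW_top B \<and> B \<noteq> {} \<and> B \<subseteq> betaN" by (auto simp: \<F>_def)
    fix C assume C: "C \<noteq> {}" "C \<subseteq> \<F>" "\<Inter>C \<noteq> {}"
    have "closedin betaW_top (\<Inter>C)" using C by (intro closedin_Inter) (auto simp: \<F>_def)
    moreover have "\<Inter>C \<subseteq> betaN"
    proof -
      obtain c where "c \<in> C" using C(1) by blast
      then have "\<Inter>C \<subseteq> c" "c \<subseteq> betaN" using C(2) by (auto simp: \<F>_def)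
      then show ?thesis by blast
    qed
    moreover have "\<forall>x\<in>betaN. \<forall>m\<in>\<Inter>C. uadd x m \<in> \<Inter>C" using C(2) by (auto simp: \<F>_def)
    ultimately show "\<Inter>C \<in> \<F>" using C(3) by (simp add: \<F>_def)
  qed
  then obtain M where M: "M \<in> \<F>" "\<forall>B\<in>\<F>. B \<subseteq> M \<longrightarrow> B = M" by blast
  have MN: "M \<subseteq> betaN" and Mne: "M \<noteq> {}" and Mcl: "closedin betaW_top M"
    and Mid: "\<forall>x\<in>betaN. \<forall>m\<in>M. uadd x m \<in> M"
    using M(1) by (auto simp: \<F>_def)
  have c1: "compactin betaW_top M" using closed_compactin[OF compact_betaN MN Mcl] .
  have c3: "\<And>x y. x \<in> M \<Longrightarrow> y \<in> M \<Longrightarrow> uadd x y \<in> M" using Mid MN by blast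
  have c4: "\<And>x y z. x \<in> M \<Longrightarrow> y \<in> M \<Longrightarrow> z \<in> M \<Longrightarrow> uadd (uadd x y) z = uadd x (uadd y z)"
    by (simp add: uadd_assoc)
  have c5: "continuous_map (subtopology betaW_top M) betaW_top (\<lambda>x. uadd x y)" if "y \<in> M" for y
  proof -
    have "y \<in> betaW" using that MN betaN_sub by blast
    then show ?thesis using cont_right continuous_map_from_subtopology by blast
  qed
  have "\<exists>q\<in>M. uadd q q = q" by (rule ellis[OF Hausdorff_bW c1 Mne c3 c4 c5])
  then obtain q where q: "q \<in> M" "uadd q q = q" by blast
  have qN: "q \<in> betaN" using q MN by blast
  have "e = q" if e: "e \<in> betaW" "uadd e e = e" "uadd e q = e" "uadd q e = e" for e
  proof -
    define L where "L = (\<lambda>x. uadd x e) ` betaN"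
    have LN: "L \<subseteq> betaN" using e(1) uadd_betaN_left by (auto simp: L_def)
    have LM: "L \<subseteq> M"
    proof
      fix z assume "z \<in> L"
      then obtain x where x: "x \<in> betaN" "z = uadd x e" by (auto simp: L_def)
      have "z = uadd (uadd x e) q" using x e(3) by (simp add: uadd_assoc)
      moreover have "uadd x e \<in> betaN" using x(1) e(1) by (rule uadd_betaN_left)
      ultimately show "z \<in> M" using Mid q(1) by simp
    qed
    have "L \<in> \<F>"
      unfolding \<F>_def
    proof (intro CollectI conjI ballI)
      show "L \<subseteq> betaN" by (rule LN)
      show "L \<noteq> {}" using pr1_betaN by (auto simp: L_def)
      show "closedin betaW_top L" unfolding L_def
        by (rule image_closed_bW[OF compact_betaN cont_right[OF e(1)]])
      fix x m assume "x \<in> betaN" "m \<in> L"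
      then obtain y where y: "y \<in> betaN" "m = uadd y e" by (auto simp: L_def)
      have "uadd x m = uadd (uadd x y) e" using y by (simp add: uadd_assoc)
      moreover have "uadd x y \<in> betaN" using \<open>x \<in> betaN\<close> y(1) betaN_sub uadd_betaN_left by blast
      ultimately show "uadd x m \<in> L" by (auto simp: L_def)
    qed
    then have "L = M" using M(2) LM by blast
    then have "q \<in> L" using q(1) by simp
    then obtain x where x: "q = uadd x e" by (auto simp: L_def)
    have "uadd q e = uadd x (uadd e e)" using x by (simp add: uadd_assoc)
    then have "uadd q e = q" using e(2) x by simp
    then show "e = q" using e(4) by simp
  qed
  then show ?thesis using qN q(2) by blast
qed

lemma topspace_Y: "topspace (Ytop l) = PiE {1..l} (\<lambda>_. betaW)"
  by (simp add: Ytop_def)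

lemma Hausdorff_Y: "Hausdorff_space (Ytop l)"
  unfolding Ytop_def by (simp add: Hausdorff_space_product_topology Hausdorff_bW)

lemma compact_Y: "compact_space (Ytop l)"
  unfolding Ytop_def by (simp add: compact_space_product_topology compact_bW)

lemma Yadd_ext: "Yadd l x y \<in> extensional {1..l}"
  by (simp add: Yadd_def)

lemma Yadd_top: "x \<in> topspace (Ytop l) \<Longrightarrow> y \<in> topspace (Ytop l) \<Longrightarrow> Yadd l x y \<in> topspace (Ytop l)"
  by (auto simp: topspace_Y Yadd_def PiE_iff uadd_betaW)

lemma Yadd_assoc: "Yadd l (Yadd l x y) z = Yadd l x (Yadd l y z)"
  by (auto simp: Yadd_def uadd_assoc fun_eq_iff)

lemma cont_Yright:
  assumes y: "y \<in> topspace (Ytop l)"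
  shows "continuous_map (Ytop l) (Ytop l) (\<lambda>x. Yadd l x y)"
  unfolding Ytop_def continuous_map_componentwise
proof (intro conjI ballI)
  show "(\<lambda>x. Yadd l x y) ` topspace (product_topology (\<lambda>i. betaW_top) {1..l}) \<subseteq> extensional {1..l}"
    using Yadd_ext by blast
  fix k assume k: "k \<in> {1..l}"
  have yk: "y k \<in> betaW" using y k by (auto simp: topspace_Y)
  have "continuous_map (product_topology (\<lambda>i. betaW_top) {1..l}) betaW_top ((\<lambda>p. uadd p (y k)) \<circ> (\<lambda>x. x k))"
    by (rule continuous_map_compose[OF continuous_map_product_projection[OF k] cont_right[OF yk]])
  moreover have "((\<lambda>p. uadd p (y k)) \<circ> (\<lambda>x. x k)) = (\<lambda>x. Yadd l x y k)"
    using k by (auto simp: Yadd_def fun_eq_iff)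
  ultimately show "continuous_map (product_topology (\<lambda>i. betaW_top) {1..l}) betaW_top (\<lambda>x. Yadd l x y k)"
    by simp
qed

lemma cont_Yleft:
  assumes s: "\<And>k. k \<in> {1..l} \<Longrightarrow> \<exists>n. s k = pr n"
  shows "continuous_map (Ytop l) (Ytop l) (\<lambda>x. Yadd l s x)"
  unfolding Ytop_def continuous_map_componentwise
proof (intro conjI ballI)
  show "(\<lambda>x. Yadd l s x) ` topspace (product_topology (\<lambda>i. betaW_top) {1..l}) \<subseteq> extensional {1..l}"
    using Yadd_ext by blast
  fix k assume k: "k \<in> {1..l}"
  obtain n where n: "s k = pr n" using s[OF k] by blast
  have "continuous_map (product_topology (\<lambda>i. betaW_top) {1..l}) betaW_top ((\<lambda>p. uadd (pr n) p) \<circ> (\<lambda>x. x k))"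
    by (rule continuous_map_compose[OF continuous_map_product_projection[OF k] cont_left_pr])
  moreover have "((\<lambda>p. uadd (pr n) p) \<circ> (\<lambda>x. x k)) = (\<lambda>x. Yadd l s x k)"
    using k n by (auto simp: Yadd_def fun_eq_iff)
  ultimately show "continuous_map (product_topology (\<lambda>i. betaW_top) {1..l}) betaW_top (\<lambda>x. Yadd l s x k)"
    by simp
qed

lemma cont_diag: "continuous_map betaW_top (Ytop l) (\<lambda>r. (\<lambda>i\<in>{1..l}. r))"
  unfolding Ytop_def continuous_map_componentwise
  by (auto simp: continuous_map_id[unfolded id_def])

lemma clo_map:
  assumes "continuous_map X X g" "g ` A \<subseteq> X closure_of B"
  shows "g ` (X closure_of A) \<subseteq> X closure_of B"
proof -
  have "g ` (X closure_of A) \<subseteq> X closure_of (g ` A)" by (rule continuous_map_image_closure_subset[OF assms(1)])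
  also have "\<dots> \<subseteq> X closure_of (X closure_of B)" by (rule closure_of_mono[OF assms(2)])
  finally show ?thesis by simp
qed

lemma poly_tuple_top: "poly_tuple l d a \<in> topspace (Ytop l)"
  by (auto simp: topspace_Y poly_tuple_def pr_betaW)

lemma So_top: "So l d \<subseteq> topspace (Ytop l)"
  using poly_tuple_top by (auto simp: So_def)

lemma Io_So: "Io l d \<subseteq> So l d"
  by (auto simp: So_def Io_def)

lemma poly_tuple_add: "Yadd l (poly_tuple l d a) (poly_tuple l d b) = poly_tuple l d (\<lambda>k. a k + b k)"
  by (auto simp: Yadd_def poly_tuple_def uadd_pr sum.distrib algebra_simps fun_eq_iff)

lemma poly_tuple_pr: "\<And>k. k \<in> {1..l} \<Longrightarrow> \<exists>n. poly_tuple l d a k = pr n"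
  by (auto simp: poly_tuple_def)

lemma So_add: "x \<in> So l d \<Longrightarrow> y \<in> So l d \<Longrightarrow> Yadd l x y \<in> So l d"
  by (auto simp: So_def poly_tuple_add)

lemma Io_add1: "x \<in> Io l d \<Longrightarrow> y \<in> So l d \<Longrightarrow> Yadd l x y \<in> Io l d"
proof -
  assume "x \<in> Io l d" "y \<in> So l d"
  then obtain a b where ab: "x = poly_tuple l d a" "\<forall>k\<le>d. 1 \<le> a k" "y = poly_tuple l d b"
    by (auto simp: So_def Io_def)
  then have "Yadd l x y = poly_tuple l d (\<lambda>k. a k + b k)" by (simp add: poly_tuple_add)
  moreover have "\<forall>k\<le>d. 1 \<le> a k + b k" using ab(2) by (simp add: le_add1 trans_le_add1)
  ultimately show ?thesis unfolding Io_def by blast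
qed

lemma Io_add2: "x \<in> So l d \<Longrightarrow> y \<in> Io l d \<Longrightarrow> Yadd l x y \<in> Io l d"
proof -
  assume "x \<in> So l d" "y \<in> Io l d"
  then obtain a b where ab: "y = poly_tuple l d a" "\<forall>k\<le>d. 1 \<le> a k" "x = poly_tuple l d b"
    by (auto simp: So_def Io_def)
  then have "Yadd l x y = poly_tuple l d (\<lambda>k. b k + a k)" by (simp add: poly_tuple_add)
  moreover have "\<forall>k\<le>d. 1 \<le> b k + a k" using ab(2) by (simp add: trans_le_add2)
  ultimately show ?thesis unfolding Io_def by blast
qed

lemma diag_pr_So: "(\<lambda>i\<in>{1..l}. pr m) \<in> So l d"
proof -
  have "(\<Sum>k\<le>d. (if k = 0 then m else 0) * i ^ k) = m" for i :: nat
  proof -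
    have "(\<Sum>k\<le>d. (if k = 0 then m else 0) * i ^ k) = (\<Sum>k\<le>d. if k = 0 then m else 0)"
      by (rule sum.cong) auto
    also have "\<dots> = m" by simp
    finally show ?thesis .
  qed
  then have "(\<lambda>i\<in>{1..l}. pr m) = poly_tuple l d (\<lambda>k. if k = 0 then m else 0)"
    by (simp add: poly_tuple_def)
  then show ?thesis by (auto simp: So_def)
qed

lemma S_top: "Ytop l closure_of So l d \<subseteq> topspace (Ytop l)"
  by (rule closure_of_subset_topspace)

lemma So_S: "So l d \<subseteq> Ytop l closure_of So l d"
  by (rule closure_of_subset[OF So_top])

lemma S_add_So: "s \<in> So l d \<Longrightarrow> y \<in> Ytop l closure_of So l d \<Longrightarrow> Yadd l s y \<in> Ytop l closure_of So l d"
proof -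
  assume s: "s \<in> So l d" and y: "y \<in> Ytop l closure_of So l d"
  obtain a where a: "s = poly_tuple l d a" using s by (auto simp: So_def)
  have "continuous_map (Ytop l) (Ytop l) (\<lambda>x. Yadd l s x)"
    unfolding a by (rule cont_Yleft[OF poly_tuple_pr])
  moreover have "(\<lambda>x. Yadd l s x) ` So l d \<subseteq> Ytop l closure_of So l d"
    using So_add[OF s] So_S by blast
  ultimately show ?thesis using clo_map y by blast
qed

lemma S_add: "x \<in> Ytop l closure_of So l d \<Longrightarrow> y \<in> Ytop l closure_of So l d \<Longrightarrow> Yadd l x y \<in> Ytop l closure_of So l d"
proof -
  assume x: "x \<in> Ytop l closure_of So l d" and y: "y \<in> Ytop l closure_of So l d"
  have "continuous_map (Ytop l) (Ytop l) (\<lambda>x. Yadd l x y)"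
    using cont_Yright S_top y by blast
  moreover have "(\<lambda>x. Yadd l x y) ` So l d \<subseteq> Ytop l closure_of So l d"
    using S_add_So y by blast
  ultimately show ?thesis using clo_map x by blast
qed

lemma I_ideal: "is_ideal (Ytop l closure_of So l d) (Yadd l) (Ytop l closure_of Io l d)"
  unfolding is_ideal_def
proof (intro conjI ballI)
  have "poly_tuple l d (\<lambda>k. 1) \<in> Io l d" by (auto simp: Io_def)
  moreover have "Io l d \<subseteq> Ytop l closure_of Io l d"
    using closure_of_subset Io_So So_top by (metis subset_trans)
  ultimately show "Ytop l closure_of Io l d \<noteq> {}" by blast
  show "Ytop l closure_of Io l d \<subseteq> Ytop l closure_of So l d"
    by (rule closure_of_mono[OF Io_So])
  fix x y assume x: "x \<in> Ytop l closure_of So l d" and y: "y \<in> Ytop l closure_of Io l d"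
  have yS: "y \<in> Ytop l closure_of So l d" using y closure_of_mono[OF Io_So] by blast
  have IoI: "Io l d \<subseteq> Ytop l closure_of Io l d"
    using closure_of_subset Io_So So_top by (metis subset_trans)
  have 1: "Yadd l s y \<in> Ytop l closure_of Io l d" if s: "s \<in> So l d" for s
  proof -
    obtain a where a: "s = poly_tuple l d a" using s by (auto simp: So_def)
    have "continuous_map (Ytop l) (Ytop l) (\<lambda>x. Yadd l s x)"
      unfolding a by (rule cont_Yleft[OF poly_tuple_pr])
    moreover have "(\<lambda>x. Yadd l s x) ` Io l d \<subseteq> Ytop l closure_of Io l d"
      using Io_add2[OF s] IoI by blast
    ultimately show ?thesis using clo_map y by blast
  qed
  have "continuous_map (Ytop l) (Ytop l) (\<lambda>x. Yadd l x y)"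
    using cont_Yright S_top yS by blast
  moreover have "(\<lambda>x. Yadd l x y) ` So l d \<subseteq> Ytop l closure_of Io l d"
    using 1 by blast
  ultimately show "Yadd l x y \<in> Ytop l closure_of Io l d" using clo_map x by blast
  have 2: "Yadd l a x \<in> Ytop l closure_of Io l d" if a: "a \<in> Io l d" for a
  proof -
    obtain c where c: "a = poly_tuple l d c" using a by (auto simp: Io_def)
    have "continuous_map (Ytop l) (Ytop l) (\<lambda>x. Yadd l a x)"
      unfolding c by (rule cont_Yleft[OF poly_tuple_pr])
    moreover have "(\<lambda>x. Yadd l a x) ` So l d \<subseteq> Ytop l closure_of Io l d"
      using Io_add1[OF a] IoI by blast
    ultimately show ?thesis using clo_map x by blast
  qed
  have "continuous_map (Ytop l) (Ytop l) (\<lambda>y. Yadd l y x)"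
    using cont_Yright S_top x by blast
  moreover have "(\<lambda>y. Yadd l y x) ` Io l d \<subseteq> Ytop l closure_of Io l d"
    using 2 by blast
  ultimately show "Yadd l y x \<in> Ytop l closure_of Io l d" using clo_map y by blast
qed

lemma diag_S: "r \<in> betaW \<Longrightarrow> (\<lambda>i\<in>{1..l}. r) \<in> Ytop l closure_of So l d"
proof -
  assume r: "r \<in> betaW"
  have "(\<lambda>r. (\<lambda>i\<in>{1..l}. r)) ` (betaW_top closure_of range pr) \<subseteq> Ytop l closure_of ((\<lambda>r. (\<lambda>i\<in>{1..l}. r)) ` range pr)"
    by (rule continuous_map_image_closure_subset[OF cont_diag])
  also have "\<dots> \<subseteq> Ytop l closure_of So l d"
  proof (rule closure_of_mono, rule image_subsetI)
    fix x assume "x \<in> range pr"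
    then obtain m where "x = pr m" by blast
    then show "(\<lambda>i\<in>{1..l}. x) \<in> So l d" using diag_pr_So[of m l d] by simp
  qed
  finally show ?thesis using r closure_pr by blast
qed

lemma diag_add: "Yadd l (\<lambda>i\<in>{1..l}. x) (\<lambda>i\<in>{1..l}. y) = (\<lambda>i\<in>{1..l}. uadd x y)"
  by (auto simp: Yadd_def fun_eq_iff)

theorem mainTheorem6:
  fixes d l :: nat
  assumes "0 < d" and "d < l"
  shows "is_subsemigroup (Ytop l closure_of So l d) (topspace (Ytop l)) (Yadd l)
    \<and> is_ideal (Ytop l closure_of So l d) (Yadd l) (Ytop l closure_of Io l d)
    \<and> (\<forall>p \<in> Kmin betaN uadd.
          (\<lambda>i\<in>{1..l}. p) \<in> Kmin (Ytop l closure_of So l d) (Yadd l)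
        \<and> (\<lambda>i\<in>{1..l}. p) \<in> Ytop l closure_of Io l d)"
proof -
  let ?S = "Ytop l closure_of So l d"
  have P1: "is_subsemigroup ?S (topspace (Ytop l)) (Yadd l)"
    unfolding is_subsemigroup_def using S_top S_add by blast
  obtain q where q: "q \<in> betaN" "uadd q q = q"
    and qm: "\<forall>e\<in>betaW. uadd e e = e \<longrightarrow> uadd e q = e \<longrightarrow> uadd q e = e \<longrightarrow> e = q"
    using exists_minq by auto
  have qmin: "e = q" if "e \<in> betaW" "uadd e e = e" "uadd e q = e" "uadd q e = e" for e
    using qm that by simp
  have qW: "q \<in> betaW" using q(1) betaN_sub by blast
  have Ncl: "\<And>x y. x \<in> betaN \<Longrightarrow> y \<in> betaN \<Longrightarrow> uadd x y \<in> betaN"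
    using betaN_sub uadd_betaN_right by blast
  have qN_ideals: "q \<in> J" if "is_ideal betaN uadd J" for J
  proof (rule min_idem_in_ideal[OF Hausdorff_bW compact_betaN Ncl _ _ q(1) q(2) _ that])
    show "\<And>x y z. uadd (uadd x y) z = uadd x (uadd y z)" by (simp add: uadd_assoc)
    fix y assume "y \<in> betaN"
    then have "y \<in> betaW" using betaN_sub by blast
    then show "continuous_map (subtopology betaW_top betaN) betaW_top (\<lambda>x. uadd x y)"
      using cont_right continuous_map_from_subtopology by blast
  next
    fix g assume "g \<in> betaN" "uadd g g = g" "uadd g q = g" "uadd q g = g"
    then show "g = q" using qmin betaN_sub by blast
  qed
  define e where "e = (\<lambda>i\<in>{1..l}. q)"
  have eS: "e \<in> ?S" unfolding e_def using diag_S[OF qW] .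
  have ee: "Yadd l e e = e" unfolding e_def diag_add q(2) ..
  have Scpt: "compactin (Ytop l) ?S"
    by (rule closedin_compact_space[OF compact_Y closedin_closure_of])
  have eS_ideals: "e \<in> J" if J: "is_ideal ?S (Yadd l) J" for J
  proof (rule min_idem_in_ideal[OF Hausdorff_Y Scpt S_add _ _ eS ee _ J])
    show "\<And>x y z. Yadd l (Yadd l x y) z = Yadd l x (Yadd l y z)" by (simp add: Yadd_assoc)
    fix y assume "y \<in> ?S"
    then have "y \<in> topspace (Ytop l)" using S_top by blast
    then show "continuous_map (subtopology (Ytop l) ?S) (Ytop l) (\<lambda>x. Yadd l x y)"
      by (rule continuous_map_from_subtopology[OF cont_Yright])
  next
    fix g assume g: "g \<in> ?S" "Yadd l g g = g" "Yadd l g e = g" "Yadd l e g = g"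
    have gP: "g \<in> PiE {1..l} (\<lambda>_. betaW)" using subsetD[OF S_top g(1)] by (simp only: topspace_Y)
    show "g = e"
    proof (rule ext)
      fix i
      show "g i = e i"
      proof (cases "i \<in> {1..l}")
        case True
        have gi: "g i \<in> betaW" using gP True by auto
        have "uadd (g i) (g i) = g i" using fun_cong[OF g(2), of i] True by (simp add: Yadd_def)
        moreover have "uadd (g i) q = g i" using fun_cong[OF g(3), of i] True by (simp add: Yadd_def e_def)
        moreover have "uadd q (g i) = g i" using fun_cong[OF g(4), of i] True by (simp add: Yadd_def e_def)
        ultimately have "g i = q" using qmin gi by blast
        then show ?thesis using True by (simp add: e_def)
      next
        case False
        then show ?thesis using gP by (auto simp: e_def PiE_iff extensional_def)
      qed
    qed
  qed
  have KS: "x \<in> Kmin ?S (Yadd l) \<longleftrightarrow> (\<forall>J. is_ideal ?S (Yadd l) J \<longrightarrow> x \<in> J)" for x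
    using Kmin_char[of ?S "Yadd l", OF S_add eS eS_ideals] by blast
  have KN: "x \<in> Kmin betaN uadd \<longleftrightarrow> (\<forall>J. is_ideal betaN uadd J \<longrightarrow> x \<in> J)" for x
    using Kmin_char[of betaN uadd, OF Ncl q(1) qN_ideals] by blast
  define R where "R = {r \<in> betaN. \<forall>J. is_ideal ?S (Yadd l) J \<longrightarrow> (\<lambda>i\<in>{1..l}. r) \<in> J}"
  have "is_ideal betaN uadd R"
    unfolding is_ideal_def
  proof (intro conjI ballI)
    show "R \<noteq> {}" using q(1) eS_ideals by (auto simp: R_def e_def)
    show "R \<subseteq> betaN" by (auto simp: R_def)
    fix x r assume x: "x \<in> betaN" and r: "r \<in> R"
    have xS: "(\<lambda>i\<in>{1..l}. x) \<in> ?S" using x betaN_sub diag_S by blast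
    have rN: "r \<in> betaN" using r by (simp add: R_def)
    show "uadd x r \<in> R"
      unfolding R_def
    proof (intro CollectI conjI allI impI)
      show "uadd x r \<in> betaN" using x rN betaN_sub uadd_betaN_right by blast
      fix J assume J: "is_ideal ?S (Yadd l) J"
      then have "(\<lambda>i\<in>{1..l}. r) \<in> J" using r by (simp add: R_def)
      then have "Yadd l (\<lambda>i\<in>{1..l}. x) (\<lambda>i\<in>{1..l}. r) \<in> J" using J xS by (simp add: is_ideal_def)
      then show "(\<lambda>i\<in>{1..l}. uadd x r) \<in> J" by (simp only: diag_add)
    qed
    show "uadd r x \<in> R"
      unfolding R_def
    proof (intro CollectI conjI allI impI)
      show "uadd r x \<in> betaN" using x rN betaN_sub uadd_betaN_left by blast
      fix J assume J: "is_ideal ?S (Yadd l) J"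
      then have "(\<lambda>i\<in>{1..l}. r) \<in> J" using r by (simp add: R_def)
      then have "Yadd l (\<lambda>i\<in>{1..l}. r) (\<lambda>i\<in>{1..l}. x) \<in> J" using J xS by (simp add: is_ideal_def)
      then show "(\<lambda>i\<in>{1..l}. uadd r x) \<in> J" by (simp only: diag_add)
    qed
  qed
  have P3: "\<forall>p \<in> Kmin betaN uadd.
          (\<lambda>i\<in>{1..l}. p) \<in> Kmin ?S (Yadd l) \<and> (\<lambda>i\<in>{1..l}. p) \<in> Ytop l closure_of Io l d"
  proof
    fix p assume "p \<in> Kmin betaN uadd"
    then have "p \<in> R" using KN \<open>is_ideal betaN uadd R\<close> by blast
    then have "\<forall>J. is_ideal ?S (Yadd l) J \<longrightarrow> (\<lambda>i\<in>{1..l}. p) \<in> J" by (simp add: R_def)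
    then show "(\<lambda>i\<in>{1..l}. p) \<in> Kmin ?S (Yadd l) \<and> (\<lambda>i\<in>{1..l}. p) \<in> Ytop l closure_of Io l d"
      using KS I_ideal by blast
  qed
  show ?thesis using P1 I_ideal P3 by blast
qed

end
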